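(* Consider a unifilar state channel with state update $z_i=f_{\mathsf z}(z_{i-1},y_i,x_i)$ and output $y_i=f_{\mathsf y}(z_{i-1},x_i,k_i)$, where $f_{\mathsf y}$ and $f_{\mathsf z}$ are Lipschitz with respect to the $\ell^1$ norm with constants $M_y$ and $M_z$ respectively, satisfying $M_z(M_y+1)<1$. Let $n\in\mathbb N$ and let $x^{1,n},x^{2,n}$ be two input sequences with $\max_{t=1,\dots,n}\|x^1_t-x^2_t\|_1\le\eta$, and let $y^{1,n},y^{2,n}$ be the corresponding outputs, generated with the same noise realization $k^n$ and the same initial state. Then $$\max_{t=1,\dots,n}\|y^1_t-y^2_t\|_1\le\frac{M_y\big(2-M_z(M_y+1)\big)}{1-M_z(M_y+1)}\,\eta.$$ *)

theory Defs
  imports "HOL-Analysis.Analysis"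
begin

definition l1norm :: "real ^ 'n \<Rightarrow> real" where
  "l1norm v = (\<Sum>i\<in>UNIV. \<bar>v $ i\<bar>)"

definition lipschitz3_l1 ::
  "real \<Rightarrow> (real ^ 'a \<Rightarrow> real ^ 'b \<Rightarrow> real ^ 'c \<Rightarrow> real ^ 'd) \<Rightarrow> bool" where
  "lipschitz3_l1 M f \<longleftrightarrow>
     (\<forall>a b c a' b' c'. l1norm (f a b c - f a' b' c')
        \<le> M * (l1norm (a - a') + l1norm (b - b') + l1norm (c - c')))"

text \<open>Unifilar state channel: state z_i = fz z_(i-1) y_i x_i,
  output y_i = fy z_(i-1) x_i k_i, initial state z_0; time indices start at 1.\<close>
primrec chan_state ::
  "(real ^ 'z \<Rightarrow> real ^ 'x \<Rightarrow> real ^ 'k \<Rightarrow> real ^ 'y) \<Rightarrow>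
   (real ^ 'z \<Rightarrow> real ^ 'y \<Rightarrow> real ^ 'x \<Rightarrow> real ^ 'z) \<Rightarrow>
   real ^ 'z \<Rightarrow> (nat \<Rightarrow> real ^ 'x) \<Rightarrow> (nat \<Rightarrow> real ^ 'k) \<Rightarrow> nat \<Rightarrow> real ^ 'z" where
  "chan_state fy fz z0 x k 0 = z0"
| "chan_state fy fz z0 x k (Suc i) =
     fz (chan_state fy fz z0 x k i)
        (fy (chan_state fy fz z0 x k i) (x (Suc i)) (k (Suc i)))
        (x (Suc i))"

definition chan_out ::
  "(real ^ 'z \<Rightarrow> real ^ 'x \<Rightarrow> real ^ 'k \<Rightarrow> real ^ 'y) \<Rightarrow>
   (real ^ 'z \<Rightarrow> real ^ 'y \<Rightarrow> real ^ 'x \<Rightarrow> real ^ 'z) \<Rightarrow>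
   real ^ 'z \<Rightarrow> (nat \<Rightarrow> real ^ 'x) \<Rightarrow> (nat \<Rightarrow> real ^ 'k) \<Rightarrow> nat \<Rightarrow> real ^ 'y" where
  "chan_out fy fz z0 x k i = fy (chan_state fy fz z0 x k (i - 1)) (x i) (k i)"

end

theory Submission
  imports Defs
begin

lemma l1norm_nonneg: "0 \<le> l1norm v"
  unfolding l1norm_def by (simp add: sum_nonneg)

lemma l1norm_zero[simp]: "l1norm 0 = 0"
  unfolding l1norm_def by simp

lemma l1norm_zero_diff[simp]: "l1norm (v - v) = 0"
  unfolding l1norm_def by simp

theorem lemma6:
  fixes fy :: "real ^ 'z \<Rightarrow> real ^ 'x \<Rightarrow> real ^ 'k \<Rightarrow> real ^ 'y"
    and fz :: "real ^ 'z \<Rightarrow> real ^ 'y \<Rightarrow> real ^ 'x \<Rightarrow> real ^ 'z"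
    and My Mz \<eta> :: real and n :: nat
    and z0 :: "real ^ 'z" and x1 x2 :: "nat \<Rightarrow> real ^ 'x" and k :: "nat \<Rightarrow> real ^ 'k"
  assumes "0 \<le> My" and "0 \<le> Mz"
    and "lipschitz3_l1 My fy" and "lipschitz3_l1 Mz fz"
    and "Mz * (My + 1) < 1"
    and "\<forall>t\<in>{1..n}. l1norm (x1 t - x2 t) \<le> \<eta>"
  shows "\<forall>t\<in>{1..n}. l1norm (chan_out fy fz z0 x1 k t - chan_out fy fz z0 x2 k t)
           \<le> My * (2 - Mz * (My + 1)) / (1 - Mz * (My + 1)) * \<eta>"
proof
  fix t assume t: "t \<in> {1..n}"
  define a where "a = Mz * (My + 1)"
  have a0: "0 \<le> a" "a < 1" using assms(1,2,5) by (auto simp: a_def)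
  have eta0: "0 \<le> \<eta>"
  proof -
    have "l1norm (x1 t - x2 t) \<le> \<eta>" using assms(6) t by blast
    then show ?thesis using l1norm_nonneg[of "x1 t - x2 t"] by linarith
  qed
  define d where "d i = l1norm (chan_state fy fz z0 x1 k i - chan_state fy fz z0 x2 k i)" for i
  have LY: "\<And>a b c a' b' c'. l1norm (fy a b c - fy a' b' c') \<le> My * (l1norm (a - a') + l1norm (b - b') + l1norm (c - c'))"
    using assms(3) unfolding lipschitz3_l1_def by blast
  have LZ: "\<And>a b c a' b' c'. l1norm (fz a b c - fz a' b' c') \<le> Mz * (l1norm (a - a') + l1norm (b - b') + l1norm (c - c'))"
    using assms(4) unfolding lipschitz3_l1_def by blast
  have E: "l1norm (fy (chan_state fy fz z0 x1 k i) (x1 (Suc i)) (k (Suc i))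
       - fy (chan_state fy fz z0 x2 k i) (x2 (Suc i)) (k (Suc i))) \<le> My * (d i + \<eta>)"
    if "Suc i \<le> n" for i
  proof -
    have "l1norm (x1 (Suc i) - x2 (Suc i)) \<le> \<eta>" using assms(6) that by auto
    then show ?thesis using LY[of "chan_state fy fz z0 x1 k i" "x1 (Suc i)" "k (Suc i)"
        "chan_state fy fz z0 x2 k i" "x2 (Suc i)" "k (Suc i)"] assms(1)
      unfolding d_def by (smt (verit) \<open>l1norm (x1 (Suc i) - x2 (Suc i)) \<le> \<eta>\<close> l1norm_zero_diff mult_left_mono)
  qed
  have D: "i < n \<Longrightarrow> d i \<le> a * \<eta> / (1 - a)" for i
  proof (induction i)
    case 0
    then show ?case using a0 eta0 by (simp add: d_def divide_nonneg_pos)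
  next
    case (Suc i)
    have IH: "d i \<le> a * \<eta> / (1 - a)" using Suc by simp
    have x: "l1norm (x1 (Suc i) - x2 (Suc i)) \<le> \<eta>" using assms(6) Suc by auto
    have e: "l1norm (fy (chan_state fy fz z0 x1 k i) (x1 (Suc i)) (k (Suc i))
       - fy (chan_state fy fz z0 x2 k i) (x2 (Suc i)) (k (Suc i))) \<le> My * (d i + \<eta>)"
      using E Suc by simp
    have "d (Suc i) \<le> Mz * (d i + My * (d i + \<eta>) + \<eta>)"
      unfolding d_def chan_state.simps
      apply (rule order_trans[OF LZ])
      apply (rule mult_left_mono[OF _ assms(2)])
      using e x unfolding d_def by linarith
    also have "\<dots> = a * d i + a * \<eta>" by (simp add: a_def algebra_simps)
    also have "\<dots> \<le> a * (a * \<eta> / (1 - a)) + a * \<eta>"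
      using mult_left_mono[OF IH a0(1)] by simp
    also have "\<dots> = a * \<eta> / (1 - a)" using a0 by (simp add: field_simps)
    finally show ?case .
  qed
  obtain i where i: "t = Suc i" using t by (cases t) auto
  have "l1norm (chan_out fy fz z0 x1 k t - chan_out fy fz z0 x2 k t) \<le> My * (d i + \<eta>)"
    using E[of i] t i by (simp add: chan_out_def)
  also have "\<dots> \<le> My * (a * \<eta> / (1 - a) + \<eta>)"
    using D[of i] t i assms(1) by (intro mult_left_mono) auto
  also have "\<dots> = My * \<eta> / (1 - a)" using a0 by (simp add: field_simps)
  also have "\<dots> \<le> My * (2 - a) / (1 - a) * \<eta>"
  proof -
    have "My * \<eta> \<le> My * (2 - a) * \<eta>" using a0 eta0 assms(1)
    proof -
      have "My * \<eta> * 1 \<le> My * \<eta> * (2 - a)"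
        using a0 eta0 assms(1) by (intro mult_left_mono) auto
      then show ?thesis by (simp add: algebra_simps)
    qed
    then show ?thesis using a0 by (simp add: divide_right_mono)
  qed
  finally show "l1norm (chan_out fy fz z0 x1 k t - chan_out fy fz z0 x2 k t)
           \<le> My * (2 - Mz * (My + 1)) / (1 - Mz * (My + 1)) * \<eta>" by (simp add: a_def)
qed

end
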